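(* Let $s\ge2$, $\eta>0$, and let $z\in\mathbb{R}_{\ge0}^s$ with $\sum_j z_j>0$ whose non-zero entries are not all equal. Let $\tilde z_k=\max\big(z_k-\eta\frac{\partial\mathcal{H}}{\partial z_k}(z),0\big)$ (with $\tilde z_k=0$ when $z_k=0$). If $i$ is an index of a smallest non-zero entry of $z$ then $\frac{\partial\mathcal{H}}{\partial z_i}(z)>0$ and $\tilde z_i<z_i$; if $k$ is an index of a largest entry of $z$ then $\frac{\partial\mathcal{H}}{\partial z_k}(z)<0$ and $\tilde z_k>z_k$.
   Context: $\mathcal{H}(z)=-\sum_i \frac{z_i}{\sum_j z_j}\log\frac{z_i}{\sum_j z_j}$ with $0\log0=0$; for $z_k>0$ the gradient is the partial derivative, and for $z_k=0$ it is regarded as $+\infty$. *)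

theory Defs
  imports "HOL-Analysis.Analysis"
begin

text \<open>Vectors in R^s are modelled as functions nat => real restricted to indices {..<s}.\<close>

definition plogp :: "real \<Rightarrow> real" where
  "plogp x = (if x = 0 then 0 else x * ln x)"

definition entropy :: "nat \<Rightarrow> (nat \<Rightarrow> real) \<Rightarrow> real" where
  "entropy s z = - (\<Sum>i<s. plogp (z i / (\<Sum>j<s. z j)))"

text \<open>Partial derivative of the entropy with respect to coordinate k at z
  (meaningful when z k > 0; the gradient is regarded as +infinity when z k = 0,
  which only matters through the update rule below).\<close>
definition entropy_partial :: "nat \<Rightarrow> (nat \<Rightarrow> real) \<Rightarrow> nat \<Rightarrow> real" where
  "entropy_partial s z k = deriv (\<lambda>t. entropy s (z(k := t))) (z k)"

definition entropy_step :: "nat \<Rightarrow> real \<Rightarrow> (nat \<Rightarrow> real) \<Rightarrow> nat \<Rightarrow> real" where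
  "entropy_step s \<eta> z k =
     (if z k = 0 then 0 else max (z k - \<eta> * entropy_partial s z k) 0)"

end

theory Submission
  imports Defs
begin

lemma plogp_div:
  assumes "x \<ge> 0" "S > 0"
  shows "plogp (x / S) = plogp x / S - x * ln S / S"
proof (cases "x = 0")
  case True then show ?thesis by (simp add: plogp_def)
next
  case False
  then have "x > 0" using assms by simp
  then show ?thesis using assms by (simp add: plogp_def ln_div field_simps)
qed

lemma entropy_alt:
  assumes "\<forall>j<s. w j \<ge> 0" "(\<Sum>j<s. w j) > 0"
  shows "entropy s w = ln (\<Sum>j<s. w j) - (\<Sum>j<s. plogp (w j)) / (\<Sum>j<s. w j)"
proof -
  let ?S = "\<Sum>j<s. w j"
  have "(\<Sum>i<s. plogp (w i / ?S)) = (\<Sum>i<s. plogp (w i) / ?S - w i * ln ?S / ?S)"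
    using assms by (intro sum.cong refl plogp_div) auto
  also have "\<dots> = (\<Sum>i<s. plogp (w i)) / ?S - ln ?S * (?S / ?S)"
    by (simp add: sum_subtractf sum_divide_distrib[symmetric] sum_distrib_right[symmetric] algebra_simps)
  also have "\<dots> = (\<Sum>i<s. plogp (w i)) / ?S - ln ?S" using assms by simp
  finally show ?thesis unfolding entropy_def by simp
qed

lemma sum_upd:
  fixes g :: "nat \<Rightarrow> real"
  assumes "k < s"
  shows "(\<Sum>j<s. (g(k := t)) j) = (\<Sum>j<s. g j) - g k + t"
proof -
  have "(\<Sum>j<s. (g(k := t)) j) = (g(k := t)) k + (\<Sum>j\<in>{..<s}-{k}. (g(k := t)) j)"
    using assms by (subst sum.remove[of _ k]) auto
  also have "(\<Sum>j\<in>{..<s}-{k}. (g(k := t)) j) = (\<Sum>j\<in>{..<s}-{k}. g j)"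
    by (intro sum.cong) auto
  also have "\<dots> = (\<Sum>j<s. g j) - g k"
    using assms by (subst sum.remove[of _ k, where g=g]) auto
  finally show ?thesis by simp
qed

lemma deriv_formula:
  assumes k: "k < s" and zk: "z k > 0" and nn: "\<forall>j<s. z j \<ge> 0"
  shows "entropy_partial s z k =
     (\<Sum>j<s. plogp (z j) - z j * ln (z k)) / (\<Sum>j<s. z j)^2"
proof -
  define S where "S = (\<Sum>j<s. z j)"
  define A where "A = S - z k"
  define C where "C = (\<Sum>j<s. plogp (z j)) - plogp (z k)"
  have A0: "A \<ge> 0"
  proof -
    have "z k \<le> S" unfolding S_def using k nn
      by (intro member_le_sum) auto
    then show ?thesis unfolding A_def by simp
  qed
  define f where "f t = ln (A + t) - (C + t * ln t) / (A + t)" for t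
  have eq: "entropy s (z(k := t)) = f t" if "t \<in> {0<..}" for t
  proof -
    have t: "t > 0" using that by simp
    have nn': "\<forall>j<s. (z(k := t)) j \<ge> 0" using nn t by auto
    have s1: "(\<Sum>j<s. (z(k := t)) j) = A + t" using sum_upd[OF k, of z t] unfolding A_def S_def by simp
    have s2: "(\<Sum>j<s. plogp ((z(k := t)) j)) = C + t * ln t"
    proof -
      have "(\<Sum>j<s. plogp ((z(k := t)) j)) = (\<Sum>j<s. ((plogp o z)(k := plogp t)) j)"
        by (intro sum.cong) auto
      also have "\<dots> = C + plogp t" using sum_upd[OF k, of "plogp o z" "plogp t"] unfolding C_def by simp
      finally show ?thesis using t by (simp add: plogp_def)
    qed
    have "A + t > 0" using A0 t by simp
    then show ?thesis using entropy_alt[OF nn'] s1 s2 unfolding f_def by (simp add: fun_upd_def)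
  qed
  have S0: "S > 0" unfolding A_def using A0 zk A_def by simp
  have Sk: "A + z k = S" unfolding A_def by simp
  have d: "(f has_real_derivative
      (1 / (A + z k) - ((ln (z k) + 1) * (A + z k) - (C + z k * ln (z k))) / (A + z k)^2)) (at (z k))"
    unfolding f_def using zk A0
    by (auto intro!: derivative_eq_intros simp: field_simps power2_eq_square)
  have d2: "((\<lambda>t. entropy s (z(k := t))) has_real_derivative
      (1 / (A + z k) - ((ln (z k) + 1) * (A + z k) - (C + z k * ln (z k))) / (A + z k)^2)) (at (z k))"
    by (rule has_field_derivative_transform_within_open[OF d, of "{0<..}"]) (use zk eq in auto)
  have val: "1 / (A + z k) - ((ln (z k) + 1) * (A + z k) - (C + z k * ln (z k))) / (A + z k)^2
     = (\<Sum>j<s. plogp (z j) - z j * ln (z k)) / S^2"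
  proof -
    have "(\<Sum>j<s. plogp (z j) - z j * ln (z k)) = C + z k * ln (z k) - S * ln (z k)"
      unfolding C_def S_def using zk by (simp add: sum_subtractf sum_distrib_right plogp_def)
    then show ?thesis unfolding Sk using S0 by (simp add: field_simps power2_eq_square)
  qed
  show ?thesis unfolding entropy_partial_def using DERIV_imp_deriv[OF d2] val S_def by simp
qed

theorem corollary2:
  fixes s :: nat and \<eta> :: real and z :: "nat \<Rightarrow> real"
  assumes hs: "s \<ge> 2"
    and h\<eta>: "\<eta> > 0"
    and hnonneg: "\<forall>j<s. z j \<ge> 0"
    and hsum: "(\<Sum>j<s. z j) > 0"
    and hnoteq: "\<exists>a<s. \<exists>b<s. z a \<noteq> 0 \<and> z b \<noteq> 0 \<and> z a \<noteq> z b"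
  shows "(\<forall>i<s. (z i \<noteq> 0 \<and> (\<forall>j<s. z j \<noteq> 0 \<longrightarrow> z i \<le> z j)) \<longrightarrow>
            entropy_partial s z i > 0 \<and> entropy_step s \<eta> z i < z i)
       \<and> (\<forall>k<s. (\<forall>j<s. z j \<le> z k) \<longrightarrow>
            entropy_partial s z k < 0 \<and> entropy_step s \<eta> z k > z k)"
proof -
  obtain a b where ab: "a < s" "b < s" "z a \<noteq> 0" "z b \<noteq> 0" "z a \<noteq> z b" using hnoteq by blast
  let ?S = "\<Sum>j<s. z j"
  have S2: "?S^2 > 0" using hsum by simp
  have P1: "entropy_partial s z i > 0 \<and> entropy_step s \<eta> z i < z i"
    if i: "i < s" "z i \<noteq> 0" "\<forall>j<s. z j \<noteq> 0 \<longrightarrow> z i \<le> z j" for i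
  proof -
    have zi: "z i > 0" using i hnonneg by force
    obtain c where c: "c < s" "z c > z i"
      using ab i by (metis order.not_eq_order_implies_strict)
    have tm: "0 \<le> plogp (z j) - z j * ln (z i)" if "j < s" for j
    proof (cases "z j = 0")
      case True then show ?thesis by (simp add: plogp_def)
    next
      case False
      then have "z j > 0" "z i \<le> z j" using hnonneg i that by force+
      then show ?thesis using zi by (simp add: plogp_def)
    qed
    have tc: "0 < plogp (z c) - z c * ln (z c) + z c * (ln (z c) - ln (z i))"
      using c zi by (simp add: plogp_def)
    have "0 < plogp (z c) - z c * ln (z i)" using tc by (simp add: algebra_simps)
    then have "0 < (\<Sum>j<s. plogp (z j) - z j * ln (z i))"
      using c tm by (intro sum_pos2[of _ c]) auto
    then have D: "entropy_partial s z i > 0"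
      using deriv_formula[OF i(1) zi hnonneg] S2 by simp
    then show ?thesis using zi h\<eta> by (simp add: entropy_step_def)
  qed
  have P2: "entropy_partial s z k < 0 \<and> entropy_step s \<eta> z k > z k"
    if k: "k < s" "\<forall>j<s. z j \<le> z k" for k
  proof -
    have zk: "z k > 0" using ab k hnonneg by (metis order.not_eq_order_implies_strict order.strict_trans2)
    obtain c where c: "c < s" "z c \<noteq> 0" "z c < z k"
      using ab k by (metis order.not_eq_order_implies_strict)
    have zc: "z c > 0" using c hnonneg by force
    have tm: "plogp (z j) - z j * ln (z k) \<le> 0" if "j < s" for j
    proof (cases "z j = 0")
      case True then show ?thesis by (simp add: plogp_def)
    next
      case False
      then have "z j > 0" "z j \<le> z k" using hnonneg k that by force+
      then show ?thesis by (simp add: plogp_def mult_left_mono)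
    qed
    have "plogp (z c) - z c * ln (z k) = z c * (ln (z c) - ln (z k))"
      using zc by (simp add: plogp_def algebra_simps)
    also have "\<dots> < 0" using zc c by (intro mult_pos_neg) auto
    finally have "0 < (\<Sum>j<s. - (plogp (z j) - z j * ln (z k)))"
      using c tm by (intro sum_pos2[of _ c]) auto
    then have "(\<Sum>j<s. plogp (z j) - z j * ln (z k)) < 0"
      using sum_negf[of "\<lambda>j. plogp (z j) - z j * ln (z k)" "{..<s}"] by linarith
    then have D: "entropy_partial s z k < 0"
      using deriv_formula[OF k(1) zk hnonneg] S2 by (simp add: divide_neg_pos)
    moreover have "\<eta> * entropy_partial s z k < 0" using D h\<eta> by (simp add: mult_pos_neg)
    ultimately show ?thesis using zk by (simp add: entropy_step_def)
  qed
  show ?thesis using P1 P2 by blast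
qed

end
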